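(* Let $q:\mathcal D\to\mathbb R$ be a query on a domain $\mathcal D$ of databases equipped with a neighboring relation, and let $u$ be a cost function that is symmetric in the noise, i.e. $u(q(D)+x,q(D))=u(q(D)-x,q(D))$ for all $D\in\mathcal D$ and $x\in\mathbb R$. Let $\varepsilon,\delta>0$. If $p$ is a noise distribution such that the additive noise mechanism $M_q(D;p)$ is $(\varepsilon,\delta)$-ADP, then there exists a symmetric noise distribution $\hat p$ (i.e. $\hat p(S)=\hat p(-S)$ for every measurable $S\subseteq\mathbb R$) such that $M_q(D;\hat p)$ is $(\varepsilon,\delta)$-ADP and $U(p;u,M_q,\mathcal D)=U(\hat p;u,M_q,\mathcal D)$.
   Context: A noise distribution $p$ is a probability distribution on $\mathbb R$. The additive noise mechanism is $M_q(D;p)=q(D)+x$ with $x\sim p$; with $x$ fixed, $M_q(D;x)=q(D)+x$. A randomized mechanism $M$ is $(\varepsilon,\delta)$-approximately differentially private ($(\varepsilon,\delta)$-ADP) if for all measurable sets $S$ of outputs and all neighboring $D_0,D_1\in\mathcal D$: $\Pr[M(D_0)\in S]\le e^{\varepsilon}\Pr[M(D_1)\in S]+\delta$. For a cost function $u:\mathbb R\times\mathbb R\to\mathbb R$, the utility-loss is $U(p;u,M_q,\mathcal D)=\sup_{D\in\mathcal D}\int u(M_q(D;x),q(D))\,p(x)\,dx$. For a set $S$, $-S=\{-s: s\in S\}$. *)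

theory Defs
  imports "HOL-Probability.Probability"
begin

definition noise_distribution :: "real measure \<Rightarrow> bool" where
  "noise_distribution p \<longleftrightarrow> prob_space p \<and> sets p = sets borel"

definition additive_mech :: "('d \<Rightarrow> real) \<Rightarrow> real measure \<Rightarrow> 'd \<Rightarrow> real measure" where
  "additive_mech q p D = distr p borel (\<lambda>x. q D + x)"

definition ADP :: "('d \<Rightarrow> 'd \<Rightarrow> bool) \<Rightarrow> ('d \<Rightarrow> real measure) \<Rightarrow> real \<Rightarrow> real \<Rightarrow> bool" where
  "ADP nbr M \<epsilon> \<delta> \<longleftrightarrow>
     (\<forall>D0 D1 S. nbr D0 D1 \<longrightarrow> S \<in> sets borel \<longrightarrow>
        measure (M D0) S \<le> exp \<epsilon> * measure (M D1) S + \<delta>)"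

definition utility_loss :: "real measure \<Rightarrow> (real \<Rightarrow> real \<Rightarrow> real) \<Rightarrow> ('d \<Rightarrow> real) \<Rightarrow> ereal" where
  "utility_loss p u q = (SUP D. ereal (\<integral>x. u (q D + x) (q D) \<partial>p))"

definition symmetric_noise :: "real measure \<Rightarrow> bool" where
  "symmetric_noise p \<longleftrightarrow> (\<forall>S \<in> sets borel. measure p S = measure p (uminus ` S))"

end

theory Submission
  imports Defs
begin

definition refl_kernel :: "real measure \<Rightarrow> bool \<Rightarrow> real measure" where
  "refl_kernel p b = (if b then p else distr p borel uminus)"

definition symmix :: "real measure \<Rightarrow> real measure" where
  "symmix p = measure_pmf (bernoulli_pmf (1/2)) \<bind> refl_kernel p"

lemma kernel_meas:
  assumes p: "noise_distribution p"
  shows "refl_kernel p \<in> measurable (measure_pmf (bernoulli_pmf (1/2))) (subprob_algebra borel)"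
proof -
  have ps: "prob_space p" and sp: "sets p = sets borel" using p by (auto simp: noise_distribution_def)
  have "refl_kernel p b \<in> space (subprob_algebra borel)" for b
  proof (cases b)
    case True
    then show ?thesis using ps sp by (simp add: refl_kernel_def space_subprob_algebra prob_space_imp_subprob_space)
  next
    case False
    have "prob_space (distr p borel uminus)"
      by (rule prob_space.prob_space_distr[OF ps]) (simp add: measurable_cong_sets[OF sp refl])
    then show ?thesis using False by (simp add: refl_kernel_def space_subprob_algebra prob_space_imp_subprob_space)
  qed
  then show ?thesis by simp
qed

lemma symmix_noise:
  assumes p: "noise_distribution p"
  shows "noise_distribution (symmix p)"
proof -
  have ps: "prob_space p" and sp: "sets p = sets borel" using p by (auto simp: noise_distribution_def)
  have ae: "AE b in measure_pmf (bernoulli_pmf (1/2)). prob_space (refl_kernel p b)"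
    using ps by (auto simp: refl_kernel_def intro!: prob_space.prob_space_distr simp: measurable_cong_sets[OF sp refl])
  show ?thesis unfolding noise_distribution_def symmix_def
    using prob_space.prob_space_bind[OF prob_space_measure_pmf ae kernel_meas[OF p]]
      sets_bind_measurable[OF kernel_meas[OF p]] by simp
qed

lemma symmix_emeasure:
  assumes p: "noise_distribution p" and A: "A \<in> sets borel"
  shows "emeasure (symmix p) A = ennreal (1/2) * emeasure p A + ennreal (1/2) * emeasure p (uminus -` A)"
proof -
  have ps: "prob_space p" and sp: "sets p = sets borel" using p by (auto simp: noise_distribution_def)
  have "emeasure (symmix p) A = (\<integral>\<^sup>+b. emeasure (refl_kernel p b) A \<partial>measure_pmf (bernoulli_pmf (1/2)))"
    unfolding symmix_def by (rule emeasure_bind[OF _ kernel_meas[OF p] A]) simp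
  also have "\<dots> = (\<Sum>b\<in>UNIV. ennreal (1/2) * emeasure (refl_kernel p b) A)"
    by (simp add: nn_integral_measure_pmf nn_integral_count_space_finite)
  also have "\<dots> = ennreal (1/2) * emeasure p A + ennreal (1/2) * emeasure p (uminus -` A)"
    using A sp sets_eq_imp_space_eq[OF sp] by (simp add: UNIV_bool refl_kernel_def emeasure_distr measurable_cong_sets[OF sp refl] add.commute)
  finally show ?thesis .
qed

lemma symmix_measure:
  assumes p: "noise_distribution p" and A: "A \<in> sets borel"
  shows "measure (symmix p) A = (measure p A + measure p (uminus -` A)) / 2"
proof -
  have ps: "prob_space p" and sp: "sets p = sets borel" using p by (auto simp: noise_distribution_def)
  have ps': "prob_space (symmix p)" using symmix_noise[OF p] by (simp add: noise_distribution_def)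
  have e: "\<And>B. emeasure p B = ennreal (measure p B)"
    using finite_measure.emeasure_eq_measure[OF prob_space.finite_measure[OF ps]] .
  have "emeasure (symmix p) A = ennreal (1/2) * ennreal (measure p A) + ennreal (1/2) * ennreal (measure p (uminus -` A))"
    using symmix_emeasure[OF p A] by (simp only: e)
  also have "\<dots> = ennreal (1/2 * measure p A) + ennreal (1/2 * measure p (uminus -` A))"
    by (simp only: ennreal_mult[symmetric] measure_nonneg)
  also have "\<dots> = ennreal (1/2 * measure p A + 1/2 * measure p (uminus -` A))"
    by (rule ennreal_plus[symmetric]) auto
  also have "1/2 * measure p A + 1/2 * measure p (uminus -` A) = (measure p A + measure p (uminus -` A)) / 2"
    by simp
  finally have "emeasure (symmix p) A = ennreal ((measure p A + measure p (uminus -` A)) / 2)" .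
  then show ?thesis using finite_measure.emeasure_eq_measure[OF prob_space.finite_measure[OF ps']] by simp
qed

lemma symmix_nn:
  assumes p: "noise_distribution p" and g: "g \<in> borel_measurable borel"
    and gs: "\<And>x. g (- x) = g x"
  shows "(\<integral>\<^sup>+x. g x \<partial>symmix p) = (\<integral>\<^sup>+x. g x \<partial>p)"
proof -
  have ps: "prob_space p" and sp: "sets p = sets borel" using p by (auto simp: noise_distribution_def)
  have "(\<integral>\<^sup>+x. g x \<partial>symmix p) = (\<integral>\<^sup>+b. (\<integral>\<^sup>+x. g x \<partial>refl_kernel p b) \<partial>measure_pmf (bernoulli_pmf (1/2)))"
    unfolding symmix_def by (rule nn_integral_bind[OF g kernel_meas[OF p]])
  also have "\<dots> = (\<Sum>b\<in>UNIV. ennreal (1/2) * (\<integral>\<^sup>+x. g x \<partial>refl_kernel p b))"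
    by (simp add: nn_integral_measure_pmf nn_integral_count_space_finite)
  also have "\<dots> = ennreal (1/2) * (\<integral>\<^sup>+x. g x \<partial>p) + ennreal (1/2) * (\<integral>\<^sup>+x. g x \<partial>p)"
    using g sp gs by (simp add: UNIV_bool refl_kernel_def nn_integral_distr measurable_cong_sets[OF sp refl])
  also have "\<dots> = (ennreal (1/2) + ennreal (1/2)) * (\<integral>\<^sup>+x. g x \<partial>p)"
    by (simp add: distrib_right)
  also have "ennreal (1/2) + ennreal (1/2) = 1"
    by (subst ennreal_plus[symmetric]) auto
  finally show ?thesis by simp
qed
lemma mech_measure:
  assumes r: "noise_distribution r" and S: "S \<in> sets borel"
  shows "measure (additive_mech q r D) S = measure r {x. q D + x \<in> S}"
proof -
  have sr: "sets r = sets borel" using r by (simp add: noise_distribution_def)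
  have sp: "space r = UNIV" using sets_eq_imp_space_eq[OF sr] by simp
  have m: "(\<lambda>x. q D + x) \<in> measurable r borel" by (simp add: measurable_cong_sets[OF sr refl])
  show ?thesis unfolding additive_mech_def
    by (subst measure_distr[OF m S]) (auto simp: sp vimage_def)
qed

lemma integral_symmix:
  assumes p: "noise_distribution p" and fs: "\<And>x. f (- x) = (f x :: real)"
  shows "(\<integral>x. f x \<partial>symmix p) = (\<integral>x. f x \<partial>p)"
proof -
  have sp: "sets p = sets borel" using p by (simp add: noise_distribution_def)
  have sp': "sets (symmix p) = sets borel" using symmix_noise[OF p] by (simp add: noise_distribution_def)
  show ?thesis
  proof (cases "f \<in> borel_measurable borel")
    case True
    have n1: "(\<integral>\<^sup>+x. ennreal (f x) \<partial>symmix p) = (\<integral>\<^sup>+x. ennreal (f x) \<partial>p)"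
      by (rule symmix_nn[OF p]) (use True fs in auto)
    have n2: "(\<integral>\<^sup>+x. ennreal (- f x) \<partial>symmix p) = (\<integral>\<^sup>+x. ennreal (- f x) \<partial>p)"
      by (rule symmix_nn[OF p]) (use True fs in auto)
    have mp: "f \<in> borel_measurable p" "f \<in> borel_measurable (symmix p)"
      using True by (simp_all add: measurable_cong_sets[OF sp refl] measurable_cong_sets[OF sp' refl])
    have ii: "integrable (symmix p) f \<longleftrightarrow> integrable p f"
      using mp n1 n2 by (simp add: real_integrable_def)
    show ?thesis
    proof (cases "integrable p f")
      case True
      then show ?thesis using ii n1 n2 by (simp add: real_lebesgue_integral_def)
    next
      case False
      then show ?thesis using ii by (simp add: not_integrable_integral_eq)
    qed
  next
    case False
    have "\<not> integrable p f" "\<not> integrable (symmix p) f"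
      using False borel_measurable_integrable[of p f] borel_measurable_integrable[of "symmix p" f]
      by (auto simp: measurable_cong_sets[OF sp refl] measurable_cong_sets[OF sp' refl])
    then show ?thesis by (simp add: not_integrable_integral_eq)
  qed
qed

theorem lemma2:
  fixes q :: "'d \<Rightarrow> real" and nbr :: "'d \<Rightarrow> 'd \<Rightarrow> bool"
    and u :: "real \<Rightarrow> real \<Rightarrow> real" and p :: "real measure"
    and \<epsilon> \<delta> :: real
  assumes u_sym: "\<And>D x. u (q D + x) (q D) = u (q D - x) (q D)"
    and nbr_sym: "symp nbr"
    and eps: "\<epsilon> > 0" and delta: "\<delta> > 0"
    and p: "noise_distribution p"
    and adp: "ADP nbr (additive_mech q p) \<epsilon> \<delta>"
  shows "\<exists>p'. noise_distribution p' \<and> symmetric_noise p'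
           \<and> ADP nbr (additive_mech q p') \<epsilon> \<delta>
           \<and> utility_loss p u q = utility_loss p' u q"
proof (intro exI conjI)
  let ?p = "symmix p"
  show np: "noise_distribution ?p" by (rule symmix_noise[OF p])
  have img: "uminus ` S = uminus -` S" for S :: "real set"
    by (auto simp: image_iff) (metis minus_minus)
  show "symmetric_noise ?p"
    unfolding symmetric_noise_def
  proof
    fix S :: "real set" assume S: "S \<in> sets borel"
    have "uminus -` S \<inter> space borel \<in> sets borel"
      by (rule measurable_sets[OF _ S]) simp
    then have S': "uminus -` S \<in> sets borel" by simp
    show "measure ?p S = measure ?p (uminus ` S)"
    proof -
      have "uminus -` uminus -` S = S" by auto
      then show ?thesis
        unfolding img using symmix_measure[OF p S] symmix_measure[OF p S'] by simp
    qed
  qed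
  show "ADP nbr (additive_mech q ?p) \<epsilon> \<delta>"
    unfolding ADP_def
  proof (intro allI impI)
    fix D0 D1 S assume nb: "nbr D0 D1" and S: "S \<in> sets (borel :: real measure)"
    have nb': "nbr D1 D0" using nbr_sym nb by (meson sympD)
    define S' where "S' = {y. q D0 + q D1 - y \<in> S}"
    have S'b: "S' \<in> sets borel" unfolding S'_def using S by measurable
    have T: "{x. q D + x \<in> S} \<in> sets borel" for D using S by measurable
    have a1: "measure p {x. q D0 + x \<in> S} \<le> exp \<epsilon> * measure p {x. q D1 + x \<in> S} + \<delta>"
      using adp nb S by (simp add: ADP_def mech_measure[OF p])
    have a2: "measure p {x. q D1 + x \<in> S'} \<le> exp \<epsilon> * measure p {x. q D0 + x \<in> S'} + \<delta>"
      using adp nb' S'b by (simp add: ADP_def mech_measure[OF p])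
    have e1: "{x. q D1 + x \<in> S'} = uminus -` {x. q D0 + x \<in> S}"
      by (auto simp: S'_def algebra_simps)
    have e2: "{x. q D0 + x \<in> S'} = uminus -` {x. q D1 + x \<in> S}"
      by (auto simp: S'_def algebra_simps)
    show "measure (additive_mech q ?p D0) S \<le> exp \<epsilon> * measure (additive_mech q ?p D1) S + \<delta>"
      unfolding mech_measure[OF np S] symmix_measure[OF p T]
      using a1 a2 unfolding e1 e2 by (simp add: field_simps)
  qed
  show "utility_loss p u q = utility_loss ?p u q"
    unfolding utility_loss_def
  proof (rule SUP_cong[OF refl])
    fix D
    have "(\<integral>x. u (q D + x) (q D) \<partial>?p) = (\<integral>x. u (q D + x) (q D) \<partial>p)"
      by (rule integral_symmix[OF p]) (metis u_sym diff_minus_eq_add diff_conv_add_uminus)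
    then show "ereal (\<integral>x. u (q D + x) (q D) \<partial>p) = ereal (\<integral>x. u (q D + x) (q D) \<partial>?p)" by simp
  qed
qed

end
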